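(* Let $f:\mathbb{S}^D\to\mathbb{R}$ be differentiable everywhere, and let $z\in\mathbb{S}^D$ satisfy $\inf_{y\in\mathbb{S}^D}\{f(y)-y\cdot z\}>-\infty$. Then for every $\varepsilon>0$ there is $y_\varepsilon\in\mathbb{S}^D$ such that $\inf_{y\in\mathbb{S}^D}\big\{f(y)+\varepsilon\sqrt{1+|y|^2}-y\cdot z\big\}=f(y_\varepsilon)+\varepsilon\sqrt{1+|y_\varepsilon|^2}-y_\varepsilon\cdot z$ and $|z-\nabla f(y_\varepsilon)|\le\varepsilon$. Moreover, $\lim_{\varepsilon\to0}\inf_{y\in\mathbb{S}^D}\big\{f(y)+\varepsilon\sqrt{1+|y|^2}-y\cdot z\big\}=\inf_{y\in\mathbb{S}^D}\{f(y)-y\cdot z\}$.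
   Context: $\mathbb{S}^D$ is the space of real symmetric $D\times D$ matrices, equipped with the entrywise inner product $a\cdot b=\sum_{i,j}a_{ij}b_{ij}$ and norm $|a|=\sqrt{a\cdot a}$; $\nabla f$ denotes the gradient of $f$ on $\mathbb{S}^D$ with respect to this inner product. *)

theory Defs
  imports "HOL-Analysis.Analysis"
begin

text \<open>The space of real symmetric D x D matrices, as a subspace of real^'n^'n.
  The inner product on real^'n^'n is the entrywise one, and norm is the Frobenius norm.\<close>
definition sym_mats :: "(real^'n^'n) set" where
  "sym_mats = {A. transpose A = A}"

definition sym_grad :: "(real^'n^'n \<Rightarrow> real) \<Rightarrow> real^'n^'n \<Rightarrow> real^'n^'n" where
  "sym_grad f y = (THE g. g \<in> sym_mats \<and> (f has_derivative (\<lambda>h. g \<bullet> h)) (at y within sym_mats))"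

end

theory Submission
  imports Defs
begin

lemma sym_mats_iff: "A \<in> sym_mats \<longleftrightarrow> (\<forall>i j. A$i$j = A$j$i)"
  unfolding sym_mats_def transpose_def by (auto simp: vec_eq_iff)

lemma closed_sym: "closed (sym_mats :: (real^'n^'n) set)"
proof -
  have "sym_mats = {A::real^'n^'n. \<forall>i. \<forall>j. A$i$j = A$j$i}" using sym_mats_iff by auto
  also have "closed \<dots>"
    by (intro closed_Collect_all closed_Collect_eq continuous_intros) 
  finally show ?thesis .
qed

lemma transpose_add': "transpose (x + y) = transpose x + transpose (y::real^'n^'n)"
  by (simp add: transpose_def vec_eq_iff)

lemma transpose_zero': "transpose (0::real^'n^'n) = 0"
  by (simp add: transpose_def vec_eq_iff)

lemma subspace_sym: "subspace (sym_mats :: (real^'n^'n) set)"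
  unfolding subspace_def sym_mats_def
  by (simp add: transpose_add' transpose_zero' transpose_scalar)

lemma line_deriv:
  assumes "(f has_derivative L) (at y within (S::'a::real_normed_vector set))" "subspace S" "y \<in> S" "h \<in> S"
  shows "((\<lambda>t. f (y + t *\<^sub>R h)) has_real_derivative L h) (at 0)"
proof -
  have lin: "((\<lambda>t::real. y + t *\<^sub>R h) has_derivative (\<lambda>t. t *\<^sub>R h)) (at 0)"
    by (auto intro!: derivative_eq_intros)
  have sub: "(\<lambda>t::real. y + t *\<^sub>R h) ` UNIV \<subseteq> S"
    using assms by (auto intro: subspace_add subspace_scale)
  have "(f has_derivative L) (at ((\<lambda>t::real. y + t *\<^sub>R h) 0) within (\<lambda>t::real. y + t *\<^sub>R h) ` UNIV)"
    using has_derivative_subset[OF assms(1) sub] by simp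
  from diff_chain_within[OF lin this]
  have "((\<lambda>t. f (y + t *\<^sub>R h)) has_derivative (\<lambda>t. L (t *\<^sub>R h))) (at 0)"
    by (simp add: comp_def)
  moreover have "(\<lambda>t. L (t *\<^sub>R h)) = (*) (L h)"
    using has_derivative_bounded_linear[OF assms(1)]
    by (auto simp: bounded_linear.linear linear_scale)
  ultimately show ?thesis by (simp add: has_field_derivative_def)
qed

lemma deriv_unique_sub:
  fixes f :: "'a::real_normed_vector \<Rightarrow> real"
  assumes "(f has_derivative L1) (at y within (S::'a::real_normed_vector set))"
    "(f has_derivative L2) (at y within S)" "subspace S" "y \<in> S" "h \<in> S"
  shows "L1 h = L2 h"
  by (rule DERIV_unique[OF line_deriv[OF assms(1,3-5)] line_deriv[OF assms(2,3-5)]])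

lemma deriv_change:
  assumes "(f has_derivative L1) (at y within (S::'a::real_normed_vector set))"
    "bounded_linear L2" "\<And>h. h \<in> S \<Longrightarrow> L1 h = L2 h" "subspace S" "y \<in> S"
  shows "(f has_derivative L2) (at y within S)"
proof -
  have "((\<lambda>x. norm ((f x - f y) - L1 (x - y)) / norm (x - y)) \<longlongrightarrow> 0) (at y within S)"
    using assms(1) by (simp add: has_derivative_iff_norm)
  moreover have "eventually (\<lambda>x. norm ((f x - f y) - L1 (x - y)) / norm (x - y) =
        norm ((f x - f y) - L2 (x - y)) / norm (x - y)) (at y within S)"
    unfolding eventually_at_filter
  proof (intro always_eventually allI impI)
    fix x assume "x \<in> S"
    then have "x - y \<in> S" using assms(4,5) subspace_diff by blast
    then show "norm ((f x - f y) - L1 (x - y)) / norm (x - y) =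
        norm ((f x - f y) - L2 (x - y)) / norm (x - y)" using assms(3) by metis
  qed
  ultimately have "((\<lambda>x. norm ((f x - f y) - L2 (x - y)) / norm (x - y)) \<longlongrightarrow> 0) (at y within S)"
    by (rule Lim_transform_eventually)
  then show ?thesis using assms(2) by (simp add: has_derivative_iff_norm)
qed


theorem lemma3p2:
  fixes f :: "real^'n^'n \<Rightarrow> real" and z :: "real^'n^'n"
  assumes diff: "\<forall>y\<in>sym_mats. f differentiable (at y within sym_mats)"
    and zS: "z \<in> sym_mats"
    and bdd: "bdd_below ((\<lambda>y. f y - y \<bullet> z) ` sym_mats)"
  shows "(\<forall>\<epsilon>>0. \<exists>y\<^sub>\<epsilon>\<in>sym_mats.
            (INF y\<in>sym_mats. f y + \<epsilon> * sqrt (1 + (norm y)\<^sup>2) - y \<bullet> z)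
              = f y\<^sub>\<epsilon> + \<epsilon> * sqrt (1 + (norm y\<^sub>\<epsilon>)\<^sup>2) - y\<^sub>\<epsilon> \<bullet> z
            \<and> norm (z - sym_grad f y\<^sub>\<epsilon>) \<le> \<epsilon>)
     \<and> ((\<lambda>\<epsilon>. INF y\<in>sym_mats. f y + \<epsilon> * sqrt (1 + (norm y)\<^sup>2) - y \<bullet> z)
          \<longlongrightarrow> (INF y\<in>sym_mats. f y - y \<bullet> z)) (at_right 0)"
proof -
  define S where "S = (sym_mats :: (real^'n^'n) set)"
  define m0 where "m0 = (INF y\<in>S. f y - y \<bullet> z)"
  have subS: "subspace S" and clS: "closed S" unfolding S_def by (rule subspace_sym, rule closed_sym)
  have S0: "0 \<in> S" using subS subspace_0 by blast
  have Sne: "S \<noteq> {}" using S0 by blast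
  have gbd: "m0 \<le> f y - y \<bullet> z" if "y \<in> S" for y
    unfolding m0_def using bdd that S_def by (intro cINF_lower) auto
  have cont: "continuous_on S f"
    using diff unfolding S_def continuous_on_eq_continuous_within
    using differentiable_imp_continuous_within by blast
  have sqge: "norm y \<le> sqrt (1 + (norm y)\<^sup>2)" for y :: "real^'n^'n"
    by (rule real_le_rsqrt) simp
  have Fge: "m0 + e * norm y \<le> f y + e * sqrt (1 + (norm y)\<^sup>2) - y \<bullet> z"
    if "y \<in> S" "e \<ge> 0" for y e
    using gbd[OF that(1)] mult_left_mono[OF sqge that(2), of y] by linarith
  have bddF: "bdd_below ((\<lambda>y. f y + e * sqrt (1 + (norm y)\<^sup>2) - y \<bullet> z) ` S)" if "e \<ge> 0" for e
    by (rule bdd_belowI2[of _ m0]) (use Fge[OF _ that] that in \<open>smt (verit) norm_ge_zero mult_nonneg_nonneg\<close>)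
  have part1: "\<exists>y\<^sub>\<epsilon>\<in>S.
            (INF y\<in>S. f y + \<epsilon> * sqrt (1 + (norm y)\<^sup>2) - y \<bullet> z)
              = f y\<^sub>\<epsilon> + \<epsilon> * sqrt (1 + (norm y\<^sub>\<epsilon>)\<^sup>2) - y\<^sub>\<epsilon> \<bullet> z
            \<and> norm (z - sym_grad f y\<^sub>\<epsilon>) \<le> \<epsilon>" if ep: "\<epsilon> > 0" for \<epsilon>
  proof -
    define F where "F y = f y + \<epsilon> * sqrt (1 + (norm y)\<^sup>2) - y \<bullet> z" for y
    define K where "K = S \<inter> F -` {..F 0}"
    have contF: "continuous_on S F" unfolding F_def by (intro continuous_intros cont)
    have clK: "closed K" unfolding K_def by (rule continuous_closed_preimage[OF contF clS]) simp
    have bK: "bounded K"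
    proof -
      have "K \<subseteq> cball 0 ((F 0 - m0) / \<epsilon>)"
      proof
        fix y assume "y \<in> K"
        then have "y \<in> S" "F y \<le> F 0" unfolding K_def by auto
        with Fge[OF \<open>y \<in> S\<close>, of \<epsilon>] ep have "m0 + \<epsilon> * norm y \<le> F 0" unfolding F_def by auto
        then show "y \<in> cball 0 ((F 0 - m0) / \<epsilon>)" using ep by (simp add: field_simps)
      qed
      then show ?thesis using bounded_cball bounded_subset by blast
    qed
    have "0 \<in> K" unfolding K_def using S0 by simp
    then obtain y0 where y0K: "y0 \<in> K" and y0min: "\<forall>y\<in>K. F y0 \<le> F y"
      using continuous_attains_inf[of K F] clK bK compact_eq_bounded_closed
        continuous_on_subset[OF contF] K_def by blast
    have y0S: "y0 \<in> S" using y0K K_def by auto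
    have minS: "F y0 \<le> F y" if "y \<in> S" for y
    proof (cases "y \<in> K")
      case True then show ?thesis using y0min by auto
    next
      case False then have "F y > F 0" using that K_def by auto
      moreover have "F y0 \<le> F 0" using y0min \<open>0 \<in> K\<close> by auto
      ultimately show ?thesis by simp
    qed
    have infeq: "(INF y\<in>S. F y) = F y0"
      using y0S minS by (intro cInf_eq_minimum) auto
    obtain L where L: "(f has_derivative L) (at y0 within S)"
      using diff y0S unfolding S_def differentiable_def by blast
    define s where "s = sqrt (1 + y0 \<bullet> y0)"
    have s_pos: "s > 0" unfolding s_def by (simp add: add_pos_nonneg)
    have ny0: "norm y0 \<le> s" unfolding s_def using sqge[of y0] by (simp add: power2_norm_eq_inner)
    define G where "G = z - (\<epsilon> / s) *\<^sub>R y0"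
    have GS: "G \<in> S" unfolding G_def using zS y0S subS S_def
      by (simp add: subspace_diff subspace_scale)
    have LG: "L h = G \<bullet> h" if hS: "h \<in> S" for h
    proof -
      have nq: "(norm (y0 + t *\<^sub>R h))\<^sup>2 = y0 \<bullet> y0 + 2 * t * (y0 \<bullet> h) + t\<^sup>2 * (h \<bullet> h)" for t
        unfolding power2_norm_eq_inner
        by (simp add: inner_add_left inner_add_right inner_commute power2_eq_square algebra_simps)
      have phi: "(\<lambda>t. F (y0 + t *\<^sub>R h)) = (\<lambda>t. f (y0 + t *\<^sub>R h) + \<epsilon> * sqrt (1 + (y0 \<bullet> y0 + 2 * t * (y0 \<bullet> h) + t\<^sup>2 * (h \<bullet> h))) - (y0 \<bullet> z + t * (h \<bullet> z)))"
        unfolding F_def nq by (simp add: inner_add_left)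
      have lf: "((\<lambda>t. f (y0 + t *\<^sub>R h)) has_real_derivative L h) (at 0)"
        by (rule line_deriv[OF L subS y0S hS])
      have dphi: "((\<lambda>t. F (y0 + t *\<^sub>R h)) has_real_derivative
              (L h + \<epsilon> * ((y0 \<bullet> h) / s) - h \<bullet> z)) (at 0)"
      proof -
        have q: "((\<lambda>t. 1 + (y0 \<bullet> y0 + 2 * t * (y0 \<bullet> h) + t\<^sup>2 * (h \<bullet> h))) has_real_derivative
                   2 * (y0 \<bullet> h)) (at 0)"
          by (auto intro!: derivative_eq_intros)
        have sq: "(sqrt has_real_derivative inverse s / 2) (at (1 + (y0 \<bullet> y0 + 2 * 0 * (y0 \<bullet> h) + 0\<^sup>2 * (h \<bullet> h))))"
          unfolding s_def using DERIV_real_sqrt[of "1 + y0 \<bullet> y0"] by (simp add: add_pos_nonneg)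
        have lz: "((\<lambda>t. y0 \<bullet> z + t * (h \<bullet> z)) has_real_derivative h \<bullet> z) (at 0)"
          by (auto intro!: derivative_eq_intros)
        have "((\<lambda>t. F (y0 + t *\<^sub>R h)) has_real_derivative
              (L h + \<epsilon> * (inverse s / 2 * (2 * (y0 \<bullet> h))) - h \<bullet> z)) (at 0)"
          unfolding phi
          by (intro DERIV_diff DERIV_add lf DERIV_cmult DERIV_chain2[OF sq q] lz)
        moreover have "inverse s / 2 * (2 * (y0 \<bullet> h)) = (y0 \<bullet> h) / s"
          by (simp add: field_simps)
        ultimately show ?thesis by simp
      qed
      moreover have mphi: "\<forall>t. \<bar>0 - t\<bar> < 1 \<longrightarrow> F (y0 + 0 *\<^sub>R h) \<le> F (y0 + t *\<^sub>R h)"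
        using minS subS y0S hS by (auto intro!: subspace_add subspace_scale)
      ultimately have "L h + \<epsilon> * ((y0 \<bullet> h) / s) - h \<bullet> z = 0"
        using DERIV_local_min[OF dphi zero_less_one] mphi by simp
      then show ?thesis unfolding G_def by (simp add: inner_diff_left inner_commute algebra_simps)
    qed
    have GD: "(f has_derivative (\<lambda>h. G \<bullet> h)) (at y0 within S)"
      by (rule deriv_change[OF L bounded_linear_inner_right LG subS y0S])
    have sg: "sym_grad f y0 = G"
      unfolding sym_grad_def
    proof (rule the_equality)
      show "G \<in> sym_mats \<and> (f has_derivative (\<bullet>) G) (at y0 within sym_mats)"
        using GS GD S_def by simp
    next
      fix G' assume a: "G' \<in> sym_mats \<and> (f has_derivative (\<bullet>) G') (at y0 within sym_mats)"
      then have "G' - G \<in> S" using GS subS S_def subspace_diff by blast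
      from deriv_unique_sub[of f "(\<bullet>) G'" y0 S "(\<bullet>) G", OF _ GD subS y0S this] a S_def
      have "G' \<bullet> (G' - G) = G \<bullet> (G' - G)" by simp
      then have "(G' - G) \<bullet> (G' - G) = 0" by (simp add: inner_diff_left)
      then show "G' = G" by simp
    qed
    have "norm (z - G) = \<epsilon> / s * norm y0" unfolding G_def using ep s_pos by simp
    also have "\<dots> \<le> \<epsilon>" using ny0 ep s_pos by (simp add: field_simps)
    finally show ?thesis using y0S infeq sg unfolding F_def by auto
  qed
  have part2: "((\<lambda>\<epsilon>. INF y\<in>S. f y + \<epsilon> * sqrt (1 + (norm y)\<^sup>2) - y \<bullet> z) \<longlongrightarrow> m0) (at_right 0)"
  proof (rule order_tendstoI)
    fix a assume "a < m0"
    show "eventually (\<lambda>e. a < (INF y\<in>S. f y + e * sqrt (1 + (norm y)\<^sup>2) - y \<bullet> z)) (at_right 0)"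
    proof (rule eventually_at_rightI[of 0 1])
      fix e :: real assume "e \<in> {0<..<1}"
      then have "m0 \<le> (INF y\<in>S. f y + e * sqrt (1 + (norm y)\<^sup>2) - y \<bullet> z)"
        using Sne Fge by (intro cINF_greatest) (auto intro: order_trans[OF _ Fge])
      then show "a < (INF y\<in>S. f y + e * sqrt (1 + (norm y)\<^sup>2) - y \<bullet> z)" using \<open>a < m0\<close> by simp
    qed simp
  next
    fix a assume "m0 < a"
    then obtain y1 where y1: "y1 \<in> S" "f y1 - y1 \<bullet> z < a"
      unfolding m0_def using cInf_less_iff[of "(\<lambda>y. f y - y \<bullet> z) ` S" a] Sne bdd S_def by auto
    define s1 where "s1 = sqrt (1 + (norm y1)\<^sup>2)"
    have s1: "s1 > 0" unfolding s1_def by (simp add: add_pos_nonneg)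
    define d where "d = (a - (f y1 - y1 \<bullet> z)) / s1"
    have d: "d > 0" unfolding d_def using y1 s1 by simp
    show "eventually (\<lambda>e. (INF y\<in>S. f y + e * sqrt (1 + (norm y)\<^sup>2) - y \<bullet> z) < a) (at_right 0)"
    proof (rule eventually_at_rightI[of 0 d])
      fix e :: real assume e: "e \<in> {0<..<d}"
      have "(INF y\<in>S. f y + e * sqrt (1 + (norm y)\<^sup>2) - y \<bullet> z) \<le> f y1 + e * s1 - y1 \<bullet> z"
        unfolding s1_def using bddF[of e] e y1 by (intro cINF_lower) auto
      also have "\<dots> < a"
      proof -
        have "e * s1 < d * s1" using e s1 by simp
        also have "d * s1 = a - (f y1 - y1 \<bullet> z)" unfolding d_def using s1 by simp
        finally show ?thesis by simp
      qed
      finally show "(INF y\<in>S. f y + e * sqrt (1 + (norm y)\<^sup>2) - y \<bullet> z) < a" .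
    qed (rule d)
  qed
  show ?thesis using part1 part2 unfolding S_def m0_def by blast
qed

end
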